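(* Let $\epsilon\in[0,1]$. If $\epsilon\ge 1-1/\sqrt2$, then the noisy projected number POVM $\mathsf N^{\rm prono}$ and the noisy projected canonical phase POVM $\Phi$, both with noise parameter $\epsilon$, are jointly measurable.
   Context: All operators act on $\mathbb C^2$. $\mathsf N^{\rm prono}_0=\begin{pmatrix}1-\epsilon/2&0\\0&\epsilon/2\end{pmatrix}$, $\mathsf N^{\rm prono}_1=\begin{pmatrix}\epsilon/2&0\\0&1-\epsilon/2\end{pmatrix}$. For Borel $X\subseteq[0,2\pi)$, $\Phi(X)=\int_X\begin{pmatrix}1&(1-\epsilon)e^{-i\theta}\\(1-\epsilon)e^{i\theta}&1\end{pmatrix}\frac{d\theta}{2\pi}$. Joint measurability means existence of a POVM $\mathsf M$ on $\{0,1\}\times[0,2\pi)$ with $\mathsf M(\{n\}\times[0,2\pi))=\mathsf N^{\rm prono}_n$ for $n=0,1$ and $\mathsf M(\{0,1\}\times X)=\Phi(X)$ for all Borel $X$. *)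

theory Defs
  imports "HOL-Analysis.Analysis"
begin

definition mat2 :: "complex \<Rightarrow> complex \<Rightarrow> complex \<Rightarrow> complex \<Rightarrow> complex^2^2" where
  "mat2 a b c d = (\<chi> i j. if i = 1 then (if j = 1 then a else b) else (if j = 1 then c else d))"

definition psd2 :: "complex^2^2 \<Rightarrow> bool" where
  "psd2 A \<longleftrightarrow> (\<forall>v::complex^2. \<exists>r::real. r \<ge> 0 \<and>
      (\<Sum>i\<in>UNIV. cnj (v $ i) * (A *v v) $ i) = complex_of_real r)"

definition is_povm :: "'a measure \<Rightarrow> ('a set \<Rightarrow> complex^2^2) \<Rightarrow> bool" where
  "is_povm \<Omega> M \<longleftrightarrow>
     (\<forall>A\<in>sets \<Omega>. psd2 (M A)) \<and> M (space \<Omega>) = mat 1 \<and>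
     (\<forall>A::nat \<Rightarrow> 'a set. range A \<subseteq> sets \<Omega> \<longrightarrow> disjoint_family A \<longrightarrow>
        (\<lambda>n. M (A n)) sums M (\<Union>n. A n))"

definition N_prono :: "real \<Rightarrow> nat \<Rightarrow> complex^2^2" where
  "N_prono \<epsilon> n = (if n = 0 then mat2 (1 - \<epsilon>/2) 0 0 (\<epsilon>/2) else mat2 (\<epsilon>/2) 0 0 (1 - \<epsilon>/2))"

definition Phi_phase :: "real \<Rightarrow> real set \<Rightarrow> complex^2^2" where
  "Phi_phase \<epsilon> X = set_lebesgue_integral lborel X
     (\<lambda>\<theta>. (1 / (2 * pi)) *\<^sub>R mat2 1 (complex_of_real (1 - \<epsilon>) * cis (- \<theta>))
                                   (complex_of_real (1 - \<epsilon>) * cis \<theta>) 1)"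

definition joint_space :: "(nat \<times> real) measure" where
  "joint_space = count_space {0, 1} \<Otimes>\<^sub>M restrict_space borel {0..<2*pi}"

definition jointly_measurable :: "real \<Rightarrow> bool" where
  "jointly_measurable \<epsilon> \<longleftrightarrow> (\<exists>M. is_povm joint_space M \<and>
     (\<forall>n\<in>{0::nat, 1}. M ({n} \<times> {0..<2*pi}) = N_prono \<epsilon> n) \<and>
     (\<forall>X. X \<in> sets borel \<and> X \<subseteq> {0..<2*pi} \<longrightarrow> M ({0, 1} \<times> X) = Phi_phase \<epsilon> X))"

end

theory Submission
  imports Defs
begin


lemma set_integral_sums:
  fixes f :: "_ \<Rightarrow> 'a :: {banach, second_countable_topology}"
  assumes meas[intro]: "\<And>i::nat. A i \<in> sets M"
    and disj: "\<And>i j. i \<noteq> j \<Longrightarrow> A i \<inter> A j = {}"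
    and intgbl: "set_integrable M (\<Union>i. A i) f"
  shows "(\<lambda>i. (LINT x:(A i)|M. f x)) sums (LINT x:(\<Union>i. A i)|M. f x)"
    unfolding set_lebesgue_integral_def
proof -
  have int_A: "integrable M (\<lambda>x. indicat_real (A i) x *\<^sub>R f x)" for i
    using intgbl unfolding set_integrable_def [symmetric]
    by (rule set_integrable_subset) auto
  { fix x assume "x \<in> space M"
    have "(\<lambda>i. indicator (A i) x *\<^sub>R f x) sums (indicator (\<Union>i. A i) x *\<^sub>R f x)"
      by (intro sums_scaleR_left indicator_sums) (simp add: disjoint_family_on_def disj) }
  note sums = this
  have norm_f: "\<And>i. set_integrable M (A i) (\<lambda>x. norm (f x))"
    using int_A[THEN integrable_norm] unfolding set_integrable_def by auto
  have s1: "AE x in M. summable (\<lambda>i. norm (indicator (A i) x *\<^sub>R f x))"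
    using disj by (intro AE_I2) (auto intro!: summable_mult2 sums_summable[OF indicator_sums] simp: disjoint_family_on_def)
  have s2: "summable (\<lambda>i. LINT x|M. norm (indicator (A i) x *\<^sub>R f x))"
  proof (rule summableI_nonneg_bounded)
    fix n
    show "0 \<le> LINT x|M. norm (indicator (A n) x *\<^sub>R f x)"
      using norm_f by (auto intro!: integral_nonneg_AE)
    have "(\<Sum>i<n. LINT x|M. norm (indicator (A i) x *\<^sub>R f x)) = (\<Sum>i<n. LINT x:A i|M. norm (f x))"
      by (simp add: abs_mult set_lebesgue_integral_def)
    also have "\<dots> = set_lebesgue_integral M (\<Union>i<n. A i) (\<lambda>x. norm (f x))"
      using norm_f
      by (subst set_integral_finite_Union) (auto simp: disjoint_family_on_def disj)
    also have "\<dots> \<le> set_lebesgue_integral M (\<Union>i. A i) (\<lambda>x. norm (f x))"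
      using intgbl[unfolded set_integrable_def, THEN integrable_norm] norm_f
      unfolding set_lebesgue_integral_def set_integrable_def
      apply (intro integral_mono set_integrable_UN[of "{..<n}", unfolded set_integrable_def])
          apply (auto split: split_indicator)
      done
    finally show "(\<Sum>i<n. LINT x|M. norm (indicator (A i) x *\<^sub>R f x)) \<le>
      set_lebesgue_integral M (\<Union>i. A i) (\<lambda>x. norm (f x))"
      by simp
  qed
  have "(\<lambda>i. integral\<^sup>L M (\<lambda>x. indicator (A i) x *\<^sub>R f x)) sums (\<integral>x. (\<Sum>i. indicator (A i) x *\<^sub>R f x) \<partial>M)"
    by (rule sums_integral[OF int_A s1 s2])
  moreover have "(\<integral>x. (\<Sum>i. indicator (A i) x *\<^sub>R f x) \<partial>M) = LINT x|M. indicator (\<Union>(A ` UNIV)) x *\<^sub>R f x"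
    by (rule Bochner_Integration.integral_cong[OF refl]) (rule sums_unique[OF sums, symmetric])
  ultimately show "(\<lambda>i. LINT x|M. indicator (A i) x *\<^sub>R f x) sums (LINT x|M. indicator (\<Union>(A ` UNIV)) x *\<^sub>R f x)"
    by simp
qed

lemma int_cos: "(LINT x:{0..<2*pi}|lborel. cos x) = 0"
proof -
  have "(LINT x:{0..<2*pi}|lborel. cos x) = (LINT x:{0..2*pi}|lborel. cos x)"
    by (rule set_integral_cong_set) (auto intro!: eventually_mono[OF AE_lborel_singleton[of "2*pi"]] simp: set_borel_measurable_def)
  also have "\<dots> = sin (2*pi) - sin 0"
    unfolding set_lebesgue_integral_def
    by (rule integral_FTC_atLeastAtMost) (auto intro!: derivative_eq_intros continuous_intros simp: has_real_derivative_iff_has_vector_derivative[symmetric])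
  finally show ?thesis by simp
qed

lemma int_sin: "(LINT x:{0..<2*pi}|lborel. sin x) = 0"
proof -
  have "(LINT x:{0..<2*pi}|lborel. sin x) = (LINT x:{0..2*pi}|lborel. sin x)"
    by (rule set_integral_cong_set) (auto intro!: eventually_mono[OF AE_lborel_singleton[of "2*pi"]] simp: set_borel_measurable_def)
  also have "\<dots> = (- cos (2*pi)) - (- cos 0)"
    unfolding set_lebesgue_integral_def
    by (rule integral_FTC_atLeastAtMost) (auto intro!: derivative_eq_intros continuous_intros simp: has_real_derivative_iff_has_vector_derivative[symmetric])
  finally show ?thesis by simp
qed

lemma set_integral_set_integrable_cont:
  fixes f :: "real \<Rightarrow> 'a::{banach, second_countable_topology}"
  assumes "continuous_on UNIV f" "S \<in> sets borel" "S \<subseteq> {0..<2*pi}"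
  shows "set_integrable lborel S f"
proof -
  have "set_integrable lborel {0..2*pi} f"
    by (rule borel_integrable_atLeastAtMost') (rule continuous_on_subset[OF assms(1)], simp)
  then show ?thesis
    by (rule set_integrable_subset) (use assms in auto)
qed

lemma set_integral_scaleR_left':
  fixes P :: "'a::{banach, second_countable_topology}"
  assumes "set_integrable M A f"
  shows "(LINT x:A|M. f x *\<^sub>R P) = (LINT x:A|M. f x) *\<^sub>R P"
  using assms unfolding set_lebesgue_integral_def set_integrable_def
  by (subst integral_scaleR_left[symmetric]) (auto simp: scaleR_scaleR)

lemma full_int:
  fixes C P Q :: "complex^2^2"
  shows "(LINT x:{0..<2*pi}|lborel. C + cos x *\<^sub>R P + sin x *\<^sub>R Q) = (2*pi) *\<^sub>R C"
proof -
  have i1: "set_integrable lborel {0..<2*pi} (\<lambda>x. C)"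
    by (rule set_integral_set_integrable_cont) auto
  have ic: "set_integrable lborel {0..<2*pi} cos"
    by (rule set_integral_set_integrable_cont) (auto intro!: continuous_intros)
  have iS: "set_integrable lborel {0..<2*pi} sin"
    by (rule set_integral_set_integrable_cont) (auto intro!: continuous_intros)
  have i2: "set_integrable lborel {0..<2*pi} (\<lambda>x. cos x *\<^sub>R P)"
    by (rule set_integral_set_integrable_cont) (auto intro!: continuous_intros)
  have i3: "set_integrable lborel {0..<2*pi} (\<lambda>x. sin x *\<^sub>R Q)"
    by (rule set_integral_set_integrable_cont) (auto intro!: continuous_intros)
  have "(LINT x:{0..<2*pi}|lborel. C + cos x *\<^sub>R P + sin x *\<^sub>R Q)
     = (LINT x:{0..<2*pi}|lborel. C) + (LINT x:{0..<2*pi}|lborel. cos x *\<^sub>R P) + (LINT x:{0..<2*pi}|lborel. sin x *\<^sub>R Q)"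
    using i1 i2 i3 by (simp add: set_integral_add)
  also have "\<dots> = (2*pi) *\<^sub>R C"
    using ic iS by (simp add: set_integral_const set_integral_scaleR_left' int_cos int_sin emeasure_lborel_Ico)
  finally show ?thesis .
qed



definition dd :: "real \<Rightarrow> nat \<Rightarrow> real" where
  "dd \<epsilon> n = (if n = 0 then 1 - \<epsilon>/2 else \<epsilon>/2)"

definition GG :: "real \<Rightarrow> nat \<Rightarrow> real \<Rightarrow> complex^2^2" where
  "GG \<epsilon> n \<theta> = (1/(2*pi)) *\<^sub>R mat2 (of_real (dd \<epsilon> n)) (of_real ((1-\<epsilon>)/2) * cis (-\<theta>))
      (of_real ((1-\<epsilon>)/2) * cis \<theta>) (of_real (1 - dd \<epsilon> n))"

lemma GG_decomp: "GG \<epsilon> n \<theta> = (1/(2*pi)) *\<^sub>R (mat2 (of_real (dd \<epsilon> n)) 0 0 (of_real (1 - dd \<epsilon> n))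
   + cos \<theta> *\<^sub>R mat2 0 (of_real ((1-\<epsilon>)/2)) (of_real ((1-\<epsilon>)/2)) 0
   + sin \<theta> *\<^sub>R mat2 0 (- \<i> * of_real ((1-\<epsilon>)/2)) (\<i> * of_real ((1-\<epsilon>)/2)) 0)"
  unfolding GG_def
  by (simp add: vec_eq_iff forall_2 mat2_def complex_eq_iff cis.sel)

lemma GG_cont: "continuous_on UNIV (GG \<epsilon> n)"
  unfolding GG_decomp[abs_def] by (intro continuous_intros)

lemma GG_full: "(LINT x:{0..<2*pi}|lborel. GG \<epsilon> n x) = mat2 (of_real (dd \<epsilon> n)) 0 0 (of_real (1 - dd \<epsilon> n))"
  unfolding GG_decomp by (simp add: full_int)

lemma GG_sum: "GG \<epsilon> 0 \<theta> + GG \<epsilon> 1 \<theta> = (1 / (2 * pi)) *\<^sub>R mat2 1 (complex_of_real (1 - \<epsilon>) * cis (- \<theta>))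
                                   (complex_of_real (1 - \<epsilon>) * cis \<theta>) 1"
  unfolding GG_def dd_def
  by (simp add: vec_eq_iff forall_2 mat2_def algebra_simps scaleR_conv_of_real)

definition qf :: "complex^2 \<Rightarrow> complex^2^2 \<Rightarrow> complex" where
  "qf v A = (\<Sum>i\<in>UNIV. cnj (v $ i) * (A *v v) $ i)"

lemma qf_scaleR: "qf v (r *\<^sub>R A) = r *\<^sub>R qf v A"
  apply (simp add: qf_def matrix_vector_mult_def sum_2 vector_scaleR_component)
  apply (simp add: scaleR_conv_of_real algebra_simps)
  done

lemma qf_add: "qf v (A + B) = qf v A + qf v B"
  by (simp add: qf_def matrix_vector_mult_def sum_2 algebra_simps)

lemma qf_linear: "bounded_linear (qf v)"
proof -
  have "linear (qf v)"
    by (rule linearI) (simp_all add: qf_add qf_scaleR)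
  then show ?thesis by (simp add: linear_conv_bounded_linear)
qed

lemma qf_mat2: "qf v (mat2 (of_real a) w (cnj w) (of_real b)) =
   of_real (a * (cmod (v$1))^2 + b * (cmod (v$2))^2 + 2 * Re (cnj (v$1) * w * v$2))"
  apply (simp add: qf_def matrix_vector_mult_def sum_2 mat2_def complex_eq_iff cmod_power2)
  apply (simp add: algebra_simps power2_eq_square)
  done

lemma lin_aux: "(k2::real) = p/4 \<Longrightarrow> p \<le> 1/2 \<Longrightarrow> p = 1 - 2*e + q \<Longrightarrow> k2 \<le> (2*e - q)/4"
  by (simp add: field_simps)

lemma key_ineq:
  fixes a b k x y :: real
  assumes "0 \<le> a" "0 \<le> b" "0 \<le> k" "k^2 \<le> a*b" "0 \<le> x" "0 \<le> y"
  shows "2*k*x*y \<le> a*x^2+b*y^2"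
proof (cases "a = 0")
  case True
  then have "k^2 \<le> 0" using assms(4) by simp
  then have "k = 0" by simp
  then show ?thesis using assms by simp
next
  case False
  then have pos: "a > 0" using assms by simp
  have "a*(a*x^2+b*y^2 - 2*k*x*y) = (a*x - k*y)^2 + (a*b - k^2)*y^2"
    by (simp add: algebra_simps power2_eq_square)
  also have "\<dots> \<ge> 0" using assms by simp
  finally have "0 \<le> a*(a*x^2+b*y^2 - 2*k*x*y)" .
  then show ?thesis using pos by (simp add: zero_le_mult_iff)
qed

lemma qf_int:
  assumes "set_integrable lborel T f"
  shows "qf v (LINT x:T|lborel. f x) = (LINT x:T|lborel. qf v (f x))"
  using assms unfolding set_lebesgue_integral_def set_integrable_def
  by (simp add: integral_bounded_linear[OF qf_linear, symmetric] qf_scaleR)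

lemma GG_point:
  assumes "0 \<le> \<epsilon>" "\<epsilon> \<le> 1" "\<epsilon> \<ge> 1 - 1 / sqrt 2"
  shows "qf v (GG \<epsilon> n \<theta>) = of_real (Re (qf v (GG \<epsilon> n \<theta>))) \<and> 0 \<le> Re (qf v (GG \<epsilon> n \<theta>))"
proof -
  define k where "k = (1-\<epsilon>)/2"
  define w where "w = complex_of_real k * cis (-\<theta>)"
  have cw: "complex_of_real k * cis \<theta> = cnj w" unfolding w_def by (simp add: cis_cnj)
  define a where "a = dd \<epsilon> n"
  define r where "r = a * (cmod (v$1))^2 + (1-a) * (cmod (v$2))^2 + 2 * Re (cnj (v$1) * w * v$2)"
  have "qf v (GG \<epsilon> n \<theta>) = (1/(2*pi)) *\<^sub>R qf v (mat2 (of_real a) w (cnj w) (of_real (1-a)))"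
  proof -
    have G: "GG \<epsilon> n \<theta> = (1/(2*pi)) *\<^sub>R mat2 (of_real a) w (cnj w) (of_real (1-a))"
      unfolding GG_def a_def w_def k_def by (simp add: cis_cnj)
    show ?thesis by (simp only: G qf_scaleR)
  qed
  also have "\<dots> = of_real (r/(2*pi))"
    unfolding qf_mat2 r_def[symmetric] by (simp add: scaleR_conv_of_real)
  finally have eq: "qf v (GG \<epsilon> n \<theta>) = of_real (r/(2*pi))" .
  have k0: "0 \<le> k" using assms by (simp add: k_def)
  have "(1-\<epsilon>) \<le> 1/sqrt 2" using assms by simp
  then have "(1-\<epsilon>)^2 \<le> (1/sqrt 2)^2" using assms by (intro power_mono) auto
  then have "(1-\<epsilon>)^2 \<le> 1/2" by (simp add: power_divide)
  moreover have ab: "a*(1-a) = (2*\<epsilon> - \<epsilon>^2)/4"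
    by (auto simp: a_def dd_def power2_eq_square field_simps)
  moreover have "k^2 = (1-\<epsilon>)^2/4" by (simp add: k_def power_divide)
  moreover have "(1-\<epsilon>)^2 = 1 - 2*\<epsilon> + \<epsilon>^2" by (simp add: power2_eq_square algebra_simps)
  ultimately have "k^2 \<le> (2*\<epsilon> - \<epsilon>^2)/4" by (metis lin_aux)
  with ab have kk: "k^2 \<le> a*(1-a)" by simp
  have a0: "0 \<le> a" "0 \<le> 1 - a" using assms by (auto simp: a_def dd_def)
  have "norm (cnj (v$1) * w * v$2) = cmod (v$1) * k * cmod (v$2)"
    using k0 by (simp add: w_def norm_mult)
  then have "- (cmod (v$1) * k * cmod (v$2)) \<le> Re (cnj (v$1) * w * v$2)"
    using abs_Re_le_cmod[of "cnj (v$1) * w * v$2"] by arith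
  moreover have "2*k*cmod (v$1)*cmod (v$2) \<le> a*(cmod (v$1))^2+(1-a)*(cmod (v$2))^2"
    by (rule key_ineq) (use a0 k0 kk in auto)
  ultimately have "0 \<le> r" unfolding r_def by (simp add: algebra_simps)
  then show ?thesis using eq by simp
qed




lemma GG_integrable: "T \<in> sets borel \<Longrightarrow> T \<subseteq> {0..<2*pi} \<Longrightarrow> set_integrable lborel T (GG \<epsilon> n)"
  by (rule set_integral_set_integrable_cont[OF GG_cont])

lemma GG_psd:
  assumes "0 \<le> \<epsilon>" "\<epsilon> \<le> 1" "\<epsilon> \<ge> 1 - 1 / sqrt 2"
    and "T \<in> sets borel" "T \<subseteq> {0..<2*pi}"
  shows "\<exists>r\<ge>0. qf v (LINT x:T|lborel. GG \<epsilon> n x) = of_real r"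
proof -
  let ?r = "\<lambda>x. Re (qf v (GG \<epsilon> n x))"
  have "qf v (LINT x:T|lborel. GG \<epsilon> n x) = (LINT x:T|lborel. qf v (GG \<epsilon> n x))"
    by (rule qf_int[OF GG_integrable[OF assms(4,5)]])
  also have "\<dots> = (LINT x:T|lborel. complex_of_real (?r x))"
    using GG_point[OF assms(1-3)] by (metis (no_types, lifting))
  also have "\<dots> = of_real (LINT x:T|lborel. ?r x)"
    by (rule set_integral_complex_of_real)
  finally have eq: "qf v (LINT x:T|lborel. GG \<epsilon> n x) = of_real (LINT x:T|lborel. ?r x)" .
  have "0 \<le> (LINT x:T|lborel. ?r x)"
    unfolding set_lebesgue_integral_def
    using GG_point[OF assms(1-3)]
    by (intro integral_nonneg_AE AE_I2) (auto split: split_indicator)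
  with eq show ?thesis by blast
qed

lemma empty_int: "(LINT x:{}|M. f x) = (0::'a::{banach, second_countable_topology})"
  unfolding set_lebesgue_integral_def by simp

theorem mainTheorem9:
  fixes \<epsilon> :: real
  assumes "0 \<le> \<epsilon>" and "\<epsilon> \<le> 1" and "\<epsilon> \<ge> 1 - 1 / sqrt 2"
  shows "jointly_measurable \<epsilon>"
proof -
  define S :: "nat \<Rightarrow> (nat \<times> real) set \<Rightarrow> real set" where "S n A = Pair n -` A \<inter> {0..<2*pi}" for n A
  define M where "M A = (LINT x:S 0 A|lborel. GG \<epsilon> 0 x) + (LINT x:S 1 A|lborel. GG \<epsilon> 1 x)" for A
  have Ssub: "S n A \<subseteq> {0..<2*pi}" for n A unfolding S_def by auto
  have Sb: "S n A \<in> sets borel" if "A \<in> sets joint_space" for n A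
  proof -
    have "Pair n -` A \<in> sets (restrict_space borel {0..<2*pi})"
      using that unfolding joint_space_def by (rule sets_Pair1)
    then have "Pair n -` A \<in> sets borel"
      by (subst (asm) sets_restrict_space_iff) auto
    then show ?thesis unfolding S_def by auto
  qed
  have spc: "space joint_space = {0,1} \<times> {0..<2*pi}"
    unfolding joint_space_def by (simp add: space_pair_measure)
  have povm: "is_povm joint_space M"
    unfolding is_povm_def
  proof (intro conjI ballI allI impI)
    fix A assume A: "A \<in> sets joint_space"
    show "psd2 (M A)"
      unfolding psd2_def
    proof
      fix v :: "complex^2"
      obtain r0 where r0: "r0 \<ge> 0" "qf v (LINT x:S 0 A|lborel. GG \<epsilon> 0 x) = of_real r0"
        using GG_psd[OF assms Sb[OF A] Ssub] by blast
      obtain r1 where r1: "r1 \<ge> 0" "qf v (LINT x:S 1 A|lborel. GG \<epsilon> 1 x) = of_real r1"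
        using GG_psd[OF assms Sb[OF A] Ssub] by blast
      have "qf v (M A) = of_real (r0 + r1)"
        unfolding M_def qf_add r0 r1 by simp
      then show "\<exists>r\<ge>0. (\<Sum>i\<in>UNIV. cnj (v $ i) * (M A *v v) $ i) = complex_of_real r"
        using r0 r1 unfolding qf_def by (intro exI[of _ "r0 + r1"]) auto
    qed
  next
    have "S n (space joint_space) = {0..<2*pi}" if "n \<in> {0,1}" for n
      using that unfolding spc S_def by auto
    then show "M (space joint_space) = mat 1"
      unfolding M_def by (simp add: GG_full dd_def vec_eq_iff forall_2 mat2_def mat_def)
  next
    fix A :: "nat \<Rightarrow> (nat \<times> real) set"
    assume rA: "range A \<subseteq> sets joint_space" and dA: "disjoint_family A"
    have sn: "(\<lambda>i. LINT x:S n (A i)|lborel. GG \<epsilon> n x) sums (LINT x:S n (\<Union>i. A i)|lborel. GG \<epsilon> n x)" for n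
    proof -
      have U: "S n (\<Union>i. A i) = (\<Union>i. S n (A i))" unfolding S_def by auto
      have mb: "S n (A i) \<in> sets borel" for i using rA Sb by auto
      show ?thesis unfolding U
      proof (rule set_integral_sums)
        show "S n (A i) \<in> sets lborel" for i using mb by simp
        show "S n (A i) \<inter> S n (A j) = {}" if "i \<noteq> j" for i j
          using dA that unfolding disjoint_family_on_def S_def by auto
        show "set_integrable lborel (\<Union>i. S n (A i)) (GG \<epsilon> n)"
          by (rule GG_integrable) (use mb Ssub in auto)
      qed
    qed
    show "(\<lambda>n. M (A n)) sums M (\<Union>n. A n)"
      unfolding M_def by (intro sums_add sn)
  qed
  show ?thesis
    unfolding jointly_measurable_def
  proof (intro exI[of _ M] conjI ballI allI impI)
    show "is_povm joint_space M" by (rule povm)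
  next
    fix n :: nat assume "n \<in> {0,1}"
    then consider "n = 0" | "n = 1" by auto
    then show "M ({n} \<times> {0..<2*pi}) = N_prono \<epsilon> n"
    proof cases
      case 1
      have "S 0 ({n} \<times> {0..<2*pi}) = {0..<2*pi}" "S 1 ({n} \<times> {0..<2*pi}) = {}"
        unfolding S_def 1 by auto
      then show ?thesis unfolding M_def 1
        by (simp add: GG_full empty_int dd_def N_prono_def)
    next
      case 2
      have "S 1 ({n} \<times> {0..<2*pi}) = {0..<2*pi}" "S 0 ({n} \<times> {0..<2*pi}) = {}"
        unfolding S_def 2 by auto
      then show ?thesis unfolding M_def 2
        by (simp add: GG_full empty_int dd_def N_prono_def)
    qed
  next
    fix X :: "real set" assume X: "X \<in> sets borel \<and> X \<subseteq> {0..<2*pi}"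
    have "S n ({0,1} \<times> X) = X" if "n \<in> {0,1}" for n
      using X that unfolding S_def by auto
    then have "M ({0, 1} \<times> X) = (LINT x:X|lborel. GG \<epsilon> 0 x) + (LINT x:X|lborel. GG \<epsilon> 1 x)"
      unfolding M_def by simp
    also have "\<dots> = (LINT x:X|lborel. GG \<epsilon> 0 x + GG \<epsilon> 1 x)"
      using GG_integrable[of X] X by (simp add: set_integral_add)
    also have "\<dots> = Phi_phase \<epsilon> X"
      unfolding Phi_phase_def GG_sum ..
    finally show "M ({0, 1} \<times> X) = Phi_phase \<epsilon> X" .
  qed
qed

end
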